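(* Let $\mathcal{L}=\mathfrak{sl}_n\dot+\mathcal{I}$ be as in the context and let $\Delta:\mathcal{L}\to\mathcal{L}$ be a linear map such that $\Delta_{\mathfrak{sl}_n}(x)=-x$ for all $x\in\mathfrak{sl}_n$. Then $\Delta$ is not a local automorphism of $\mathcal{L}$.
   Context: $\mathcal{L}=\mathfrak{sl}_n\oplus\mathcal{I}$ is a simple complex Leibniz algebra: $\mathfrak{sl}_n$ is the Lie algebra of trace-zero complex $n\times n$ matrices ($n\ge2$), $\mathcal{I}$ is a nonzero irreducible finite-dimensional right $\mathfrak{sl}_n$-module with nontrivial action $v\mapsto[v,g]$, and the bracket is $[(g_1,v_1),(g_2,v_2)]=([g_1,g_2],[v_1,g_2])$. An automorphism of $\mathcal{L}$ is an invertible linear map preserving the bracket; a linear map $\Delta$ is a local automorphism if for each $x\in\mathcal{L}$ there is an automorphism $\Phi_x$ with $\Phi_x(x)=\Delta(x)$. For a linear map $\Delta$ of $\mathcal{L}$, $\Delta_{\mathfrak{sl}_n}=p\circ\Delta|_{\mathfrak{sl}_n}$, where $p$ is the projection onto $\mathfrak{sl}_n$ along $\mathcal{I}$. *)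

theory Defs
  imports "HOL-Analysis.Analysis"
begin

text \<open>The module I is modelled as complex^'m (any nonzero finite-dimensional
  complex vector space is isomorphic to one of these).\<close>

definition sl :: "(complex^'n^'n) set" where
  "sl = {A. trace A = 0}"

definition mscale :: "complex \<Rightarrow> complex^'n^'n \<Rightarrow> complex^'n^'n" where
  "mscale c A = (\<chi> i j. c * A $ i $ j)"

definition Lcar :: "((complex^'n^'n) \<times> (complex^'m)) set" where
  "Lcar = {(g, v). g \<in> sl}"

definition lscale :: "complex \<Rightarrow> (complex^'n^'n) \<times> (complex^'m) \<Rightarrow> (complex^'n^'n) \<times> (complex^'m)" where
  "lscale c x = (mscale c (fst x), c *s snd x)"

definition lbr :: "(complex^'m \<Rightarrow> complex^'n^'n \<Rightarrow> complex^'m)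
   \<Rightarrow> (complex^'n^'n) \<times> (complex^'m) \<Rightarrow> (complex^'n^'n) \<times> (complex^'m) \<Rightarrow> (complex^'n^'n) \<times> (complex^'m)" where
  "lbr act x y = (fst x ** fst y - fst y ** fst x, act (snd x) (fst y))"

definition L_linear :: "((complex^'n^'n) \<times> (complex^'m) \<Rightarrow> (complex^'n^'n) \<times> (complex^'m)) \<Rightarrow> bool" where
  "L_linear f \<longleftrightarrow> f ` Lcar \<subseteq> Lcar \<and>
     (\<forall>x\<in>Lcar. \<forall>y\<in>Lcar. f (x + y) = f x + f y) \<and>
     (\<forall>c. \<forall>x\<in>Lcar. f (lscale c x) = lscale c (f x))"

text \<open>Right sl_n-module structure v \<mapsto> [v,g] on complex^'m.\<close>
definition right_sl_module :: "(complex^'m \<Rightarrow> complex^'n^'n \<Rightarrow> complex^'m) \<Rightarrow> bool" where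
  "right_sl_module act \<longleftrightarrow>
     (\<forall>v w. \<forall>g\<in>sl. act (v + w) g = act v g + act w g) \<and>
     (\<forall>c v. \<forall>g\<in>sl. act (c *s v) g = c *s act v g) \<and>
     (\<forall>v. \<forall>g\<in>sl. \<forall>h\<in>sl. act v (g + h) = act v g + act v h) \<and>
     (\<forall>c v. \<forall>g\<in>sl. act v (mscale c g) = c *s act v g) \<and>
     (\<forall>v. \<forall>g\<in>sl. \<forall>h\<in>sl. act v (g ** h - h ** g) = act (act v g) h - act (act v h) g)"

definition sl_invariant_subspace :: "(complex^'m \<Rightarrow> complex^'n^'n \<Rightarrow> complex^'m) \<Rightarrow> (complex^'m) set \<Rightarrow> bool" where
  "sl_invariant_subspace act W \<longleftrightarrow>
     0 \<in> W \<and> (\<forall>v\<in>W. \<forall>w\<in>W. v + w \<in> W) \<and> (\<forall>c. \<forall>v\<in>W. c *s v \<in> W) \<and>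
     (\<forall>v\<in>W. \<forall>g\<in>(sl :: (complex^'n^'n) set). act v g \<in> W)"

definition irreducible_module :: "(complex^'m \<Rightarrow> complex^'n^'n \<Rightarrow> complex^'m) \<Rightarrow> bool" where
  "irreducible_module act \<longleftrightarrow>
     (\<forall>W. sl_invariant_subspace act W \<longrightarrow> W = {0} \<or> W = UNIV)"

definition nontrivial_action :: "(complex^'m \<Rightarrow> complex^'n^'n \<Rightarrow> complex^'m) \<Rightarrow> bool" where
  "nontrivial_action act \<longleftrightarrow> (\<exists>v. \<exists>g\<in>sl. act v g \<noteq> 0)"

definition L_automorphism :: "(complex^'m \<Rightarrow> complex^'n^'n \<Rightarrow> complex^'m)
    \<Rightarrow> ((complex^'n^'n) \<times> (complex^'m) \<Rightarrow> (complex^'n^'n) \<times> (complex^'m)) \<Rightarrow> bool" where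
  "L_automorphism act \<Phi> \<longleftrightarrow> L_linear \<Phi> \<and> bij_betw \<Phi> Lcar Lcar \<and>
     (\<forall>x\<in>Lcar. \<forall>y\<in>Lcar. \<Phi> (lbr act x y) = lbr act (\<Phi> x) (\<Phi> y))"

definition L_local_automorphism :: "(complex^'m \<Rightarrow> complex^'n^'n \<Rightarrow> complex^'m)
    \<Rightarrow> ((complex^'n^'n) \<times> (complex^'m) \<Rightarrow> (complex^'n^'n) \<times> (complex^'m)) \<Rightarrow> bool" where
  "L_local_automorphism act \<Delta> \<longleftrightarrow>
     (\<forall>x\<in>Lcar. \<exists>\<Phi>. L_automorphism act \<Phi> \<and> \<Phi> x = \<Delta> x)"

end

theory Submission
  imports Defs "HOL-Computational_Algebra.Fundamental_Theorem_Algebra"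
begin


definition lin :: "(complex^'m \<Rightarrow> complex^'m) \<Rightarrow> bool" where
  "lin T \<longleftrightarrow> (\<forall>x y. T (x + y) = T x + T y) \<and> (\<forall>c x. T (c *s x) = c *s T x)"

lemma lin_add: "lin T \<Longrightarrow> T (x + y) = T x + T y" by (simp add: lin_def)
lemma lin_scale: "lin T \<Longrightarrow> T (c *s x) = c *s T x" by (simp add: lin_def)
lemma lin_zero: "lin T \<Longrightarrow> T 0 = 0"
  using lin_scale[of T 0 0] by simp
lemma lin_neg: "lin T \<Longrightarrow> T (- x) = - T x"
  using lin_scale[of T "-1" x] by simp
lemma lin_diff: "lin T \<Longrightarrow> T (x - y) = T x - T y"
  using lin_add[of T x "-y"] lin_neg[of T y] by simp
lemma lin_sum: "lin T \<Longrightarrow> T (\<Sum>x\<in>S. g x) = (\<Sum>x\<in>S. T (g x))"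
  by (induction S rule: infinite_finite_induct) (auto simp: lin_zero lin_add)

definition opoly :: "(complex^'m \<Rightarrow> complex^'m) \<Rightarrow> complex poly \<Rightarrow> complex^'m \<Rightarrow> complex^'m" where
  "opoly T p v = (\<Sum>k<Suc (degree p). coeff p k *s (T^^k) v)"

lemma opoly_bound:
  assumes "degree p < N"
  shows "opoly T p v = (\<Sum>k<N. coeff p k *s (T^^k) v)"
  unfolding opoly_def
  by (rule sum.mono_neutral_left) (use assms in \<open>auto simp: coeff_eq_0\<close>)

lemma opoly_pCons:
  assumes "lin T"
  shows "opoly T (pCons a p) v = a *s v + T (opoly T p v)"
proof -
  have d: "degree (pCons a p) < Suc (Suc (degree p))"
    using degree_pCons_le[of a p] by simp
  have "opoly T (pCons a p) v = (\<Sum>k<Suc (Suc (degree p)). coeff (pCons a p) k *s (T^^k) v)"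
    by (rule opoly_bound[OF d])
  also have "\<dots> = a *s v + (\<Sum>k<Suc (degree p). coeff p k *s T ((T^^k) v))"
    by (subst sum.lessThan_Suc_shift) simp
  also have "\<dots> = a *s v + T (opoly T p v)"
    unfolding opoly_def by (simp only: lin_sum[OF assms] lin_scale[OF assms])
  finally show ?thesis .
qed

lemma opoly_0 [simp]: "opoly T 0 v = 0"
  by (simp add: opoly_def)

lemma opoly_at0: "lin T \<Longrightarrow> opoly T p 0 = 0"
  by (induction p rule: pCons_induct) (auto simp: opoly_pCons lin_zero)

lemma opoly_smult: "lin T \<Longrightarrow> opoly T (smult c p) v = c *s opoly T p v"
  by (induction p rule: pCons_induct)
     (auto simp: opoly_pCons lin_scale vec.scale_right_distrib)

lemma opoly_add: "lin T \<Longrightarrow> opoly T (p + q) v = opoly T p v + opoly T q v"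
  apply (induction p q rule: poly_induct2)
   apply simp
  apply (simp add: opoly_pCons lin_add vec.scale_left_distrib algebra_simps)
  done

lemma opoly_mult: "lin T \<Longrightarrow> opoly T (p * q) v = opoly T p (opoly T q v)"
  apply (induction p rule: pCons_induct)
   apply simp
  apply (simp add: opoly_pCons opoly_add opoly_smult)
  done

lemma opoly_const: "lin T \<Longrightarrow> opoly T [:c:] v = c *s v"
  by (simp add: opoly_pCons lin_zero)

lemma opoly_lin: "lin T \<Longrightarrow> opoly T [:a, 1:] v = a *s v + T v"
  by (simp add: opoly_pCons opoly_const lin_zero)

lemma opoly_xpow: "lin T \<Longrightarrow> opoly T ([:0,1:]^k) v = (T^^k) v"
  by (induction k) (simp_all add: opoly_mult opoly_lin opoly_const opoly_pCons one_pCons lin_zero)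

lemma opoly_monom: "opoly T (monom c k) v = c *s (T^^k) v"
proof -
  have "opoly T (monom c k) v = (\<Sum>j<Suc k. coeff (monom c k) j *s (T^^j) v)"
    by (rule opoly_bound) (simp add: degree_monom_le le_imp_less_Suc)
  also have "\<dots> = c *s (T^^k) v"
    by (simp add: coeff_monom if_distrib cong: if_cong)
  finally show ?thesis .
qed

lemma opoly_sum: "lin T \<Longrightarrow> opoly T (\<Sum>x\<in>S. f x) v = (\<Sum>x\<in>S. opoly T (f x) v)"
  by (induction S rule: infinite_finite_induct) (auto simp: opoly_add)

lemma opoly_neg: "lin T \<Longrightarrow> opoly T (- p) v = - opoly T p v"
  using opoly_smult[of T "-1" p v] by simp

lemma opoly_diff: "lin T \<Longrightarrow> opoly T (p - q) v = opoly T p v - opoly T q v"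
  using opoly_add[of T p "-q" v] opoly_neg[of T q v] by simp

lemma opoly_inj:
  assumes "lin T" "q \<noteq> 0"
    and roots: "\<And>r y. poly q r = 0 \<Longrightarrow> T y = r *s y \<Longrightarrow> y = 0"
    and "opoly T q y = 0"
  shows "y = 0"
  using assms(2-4)
proof (induction "degree q" arbitrary: q y rule: less_induct)
  case less
  show ?case
  proof (cases "degree q = 0")
    case True
    then obtain c where q: "q = [:c:]" by (metis degree_eq_zeroE)
    with less.prems have "c \<noteq> 0" by auto
    with less.prems(3) show ?thesis by (simp add: q opoly_const[OF assms(1)])
  next
    case False
    then have "\<not> constant (poly q)" by (simp add: constant_degree)
    then obtain r where r: "poly q r = 0" using fundamental_theorem_of_algebra by blast
    then obtain q' where q: "q = [:-r, 1:] * q'" using poly_eq_0_iff_dvd by (metis dvdE)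
    have q0: "q' \<noteq> 0" using less.prems(1) q by auto
    have "degree q = degree [:-r, 1:] + degree q'" unfolding q by (rule degree_mult_eq) (auto simp: q0)
    then have dq: "degree q = Suc (degree q')" by simp
    define z where "z = opoly T q' y"
    have "opoly T q y = - r *s z + T z"
      unfolding q z_def by (simp only: opoly_mult[OF assms(1)] opoly_lin[OF assms(1)])
    then have "T z = r *s z" using less.prems(3) by (simp add: add_eq_0_iff)
    then have "z = 0" using less.prems(2)[OF r] by blast
    show ?thesis
    proof (rule less.hyps[of q'])
      show "degree q' < degree q" using dq by simp
      show "q' \<noteq> 0" by (fact q0)
      show "poly q' r' = 0 \<Longrightarrow> T y' = r' *s y' \<Longrightarrow> y' = 0" for r' y'
        using less.prems(2)[of r' y'] by (simp add: q)
      show "opoly T q' y = 0" using \<open>z = 0\<close> z_def by simp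
    qed
  qed
qed




lemma dim_vec_UNIV: "vec.dim (UNIV :: (complex^'m) set) = CARD('m)"
  using dim_substandard_cart[where d = "UNIV :: 'm set", where 'a = complex] by simp

lemma card_indep_le:
  fixes S :: "(complex^'m) set"
  assumes "vec.independent S"
  shows "card S \<le> CARD('m)"
proof -
  have "card S \<le> vec.dim (UNIV :: (complex^'m) set)"
    by (rule vec.independent_card_le_dim[OF subset_UNIV assms])
  then show ?thesis by (simp only: dim_vec_UNIV)
qed

lemma opoly_sum_monom:
  "lin T \<Longrightarrow> opoly T (\<Sum>k\<in>A. monom (c k) k) v = (\<Sum>k\<in>A. c k *s (T^^k) v)"
  by (simp add: opoly_sum opoly_monom)

lemma annihilator:
  fixes T :: "complex^'m \<Rightarrow> complex^'m"
  assumes "lin T"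
  shows "\<exists>p. p \<noteq> 0 \<and> opoly T p v = 0"
proof -
  define N where "N = CARD('m)"
  define x where "x k = (T^^k) v" for k
  show ?thesis
  proof (cases "inj_on x {..N}")
    case False
    then obtain i j where ij: "i \<le> N" "j \<le> N" "i \<noteq> j" "x i = x j"
      unfolding inj_on_def by auto
    define p :: "complex poly" where "p = monom 1 i - monom 1 j"
    have "coeff p i = 1" using ij by (simp add: p_def coeff_monom)
    then have "p \<noteq> 0" by auto
    moreover have "opoly T p v = 0"
      using ij by (simp add: p_def opoly_diff[OF assms] opoly_monom x_def)
    ultimately show ?thesis by blast
  next
    case True
    define S where "S = x ` {..N}"
    have fS: "finite S" by (simp add: S_def)
    have cS: "card S = Suc N" using True by (simp add: S_def card_image)
    have "vec.dependent S"
    proof (rule ccontr)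
      assume "\<not> vec.dependent S"
      then have "card S \<le> CARD('m)" by (intro card_indep_le) simp
      with cS N_def show False by simp
    qed
    then obtain u where u: "\<exists>y\<in>S. u y \<noteq> 0" "(\<Sum>y\<in>S. u y *s y) = 0"
      using vec.dependent_finite[OF fS] by blast
    define p where "p = (\<Sum>k\<in>{..N}. monom (u (x k)) k)"
    have "opoly T p v = (\<Sum>k\<in>{..N}. u (x k) *s x k)"
      by (simp add: p_def opoly_sum_monom[OF assms] x_def)
    also have "\<dots> = (\<Sum>y\<in>S. u y *s y)"
      unfolding S_def by (simp add: sum.reindex[OF True] o_def)
    also have "\<dots> = 0" by (fact u(2))
    finally have p0: "opoly T p v = 0" .
    from u(1) obtain k where k: "k \<le> N" "u (x k) \<noteq> 0" by (auto simp: S_def)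
    have "coeff p k = (\<Sum>j\<in>{..N}. if j = k then u (x j) else 0)"
      by (simp add: p_def coeff_sum coeff_monom)
    also have "\<dots> = u (x k)" using k by simp
    finally have "p \<noteq> 0" using k by auto
    with p0 show ?thesis by blast
  qed
qed

lemma nilpotent_vec:
  fixes T :: "complex^'m \<Rightarrow> complex^'m"
  assumes "lin T" and noeig: "\<And>y r. T y = r *s y \<Longrightarrow> y \<noteq> 0 \<Longrightarrow> r = 0"
  shows "\<exists>k. (T^^k) v = 0"
proof -
  obtain p where p: "p \<noteq> 0" "opoly T p v = 0" using annihilator[OF assms(1)] by blast
  obtain q where q: "p = [:- 0, 1:] ^ order 0 p * q" "\<not> [:- 0, 1:] dvd q"
    using order_decomp[OF p(1)] by blast
  have q0: "q \<noteq> 0" using q(1) p(1) by (metis mult_zero_right)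
  have pq: "p = q * [:0, 1:] ^ order 0 p" using q(1) by (simp add: mult.commute)
  have "opoly T (q * [:0, 1:] ^ order 0 p) v = opoly T q (opoly T ([:0, 1:] ^ order 0 p) v)"
    by (rule opoly_mult[OF assms(1)])
  with pq have "opoly T p v = opoly T q (opoly T ([:0, 1:] ^ order 0 p) v)" by (simp only:)
  then have "opoly T q ((T ^^ order 0 p) v) = 0"
    using p(2) by (simp only: opoly_xpow[OF assms(1)])
  moreover have "y = 0" if "poly q r = 0" "T y = r *s y" for r y
  proof (rule ccontr)
    assume "y \<noteq> 0"
    with noeig that(2) have "r = 0" by blast
    with that(1) have "[:- 0, 1:] dvd q" using poly_eq_0_iff_dvd by blast
    with q(2) show False by blast
  qed
  ultimately have "(T ^^ order 0 p) v = 0"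
    using opoly_inj[OF assms(1) q0] by blast
  then show ?thesis by blast
qed

lemma eig_indep:
  fixes T :: "complex^'m \<Rightarrow> complex^'m" and x :: "nat \<Rightarrow> complex^'m" and N :: nat
  assumes "lin T" and eig: "\<And>k. x k \<noteq> 0" "\<And>k. T (x k) = \<mu> k *s x k" and inj: "inj \<mu>"
  shows "(\<Sum>k\<le>N. c k *s x k) = 0 \<Longrightarrow> k \<le> N \<Longrightarrow> c k = 0"
proof (induction N arbitrary: c k)
  case 0
  then show ?case using eig(1)[of 0] by simp
next
  case (Suc N)
  let ?m = "\<mu> (Suc N)"
  have A: "T (\<Sum>k\<le>Suc N. c k *s x k) = (\<Sum>k\<le>Suc N. (c k * \<mu> k) *s x k)"
    by (simp only: lin_sum[OF assms(1)] lin_scale[OF assms(1)] eig(2) vec.scale_scale)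
  have B: "?m *s (\<Sum>k\<le>Suc N. c k *s x k) = (\<Sum>k\<le>Suc N. (c k * ?m) *s x k)"
    by (simp add: vec.scale_sum_right mult.commute)
  have "(\<Sum>k\<le>Suc N. (c k * (\<mu> k - ?m)) *s x k) =
      (\<Sum>k\<le>Suc N. (c k * \<mu> k) *s x k) - (\<Sum>k\<le>Suc N. (c k * ?m) *s x k)"
    by (simp add: sum_subtractf[symmetric] right_diff_distrib vec.scale_left_diff_distrib)
  also have "\<dots> = 0" using Suc.prems(1) A B by (simp add: lin_zero[OF assms(1)])
  finally have "(\<Sum>k\<le>Suc N. (c k * (\<mu> k - ?m)) *s x k) = 0" .
  then have s: "(\<Sum>k\<le>N. (c k * (\<mu> k - ?m)) *s x k) = 0"
    by simp
  have ck: "c j = 0" if "j \<le> N" for j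
  proof -
    have "c j * (\<mu> j - ?m) = 0" using Suc.IH[OF s that] .
    moreover have "\<mu> j \<noteq> ?m" using inj that by (auto dest: injD)
    ultimately show ?thesis by simp
  qed
  show ?case
  proof (cases "k \<le> N")
    case True then show ?thesis using ck by simp
  next
    case False
    then have k: "k = Suc N" using Suc.prems(2) by simp
    have "(\<Sum>k\<le>N. c k *s x k) = 0" using ck by simp
    then have "c (Suc N) *s x (Suc N) = 0" using Suc.prems(1) by simp
    then show ?thesis using eig(1)[of "Suc N"] k by simp
  qed
qed

lemma eig_finite:
  fixes T :: "complex^'m \<Rightarrow> complex^'m" and x :: "nat \<Rightarrow> complex^'m"
  assumes "lin T" and eig: "\<And>k. x k \<noteq> 0" "\<And>k. T (x k) = \<mu> k *s x k" and inj: "inj \<mu>"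
  shows False
proof -
  define N where "N = CARD('m)"
  have injx: "inj x"
  proof (rule injI)
    fix i j assume "x i = x j"
    have "\<mu> i *s x i = T (x i)" using eig(2)[of i] by simp
    also have "\<dots> = T (x j)" using \<open>x i = x j\<close> by simp
    also have "\<dots> = \<mu> j *s x i" using eig(2)[of j] \<open>x i = x j\<close> by simp
    finally have "\<mu> i *s x i = \<mu> j *s x i" .
    then have "(\<mu> i - \<mu> j) *s x i = 0" by (simp add: vec.scale_left_diff_distrib)
    then have "\<mu> i = \<mu> j" using eig(1)[of i] by simp
    then show "i = j" using inj by (auto dest: injD)
  qed
  define S where "S = x ` {..N}"
  have fS: "finite S" by (simp add: S_def)
  have cS: "card S = Suc N" using injx by (simp add: S_def card_image inj_on_subset)
  have "\<not> vec.dependent S"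
  proof
    assume "vec.dependent S"
    then obtain u where u: "\<exists>y\<in>S. u y \<noteq> 0" "(\<Sum>y\<in>S. u y *s y) = 0"
      using vec.dependent_finite[OF fS] by blast
    have "(\<Sum>k\<le>N. u (x k) *s x k) = (\<Sum>y\<in>S. u y *s y)"
      unfolding S_def by (simp add: sum.reindex[OF inj_on_subset[OF injx]] o_def)
    then have "(\<Sum>k\<le>N. u (x k) *s x k) = 0" using u(2) by simp
    then have "\<forall>k\<le>N. u (x k) = 0"
      using eig_indep[OF assms, where N=N and c="\<lambda>k. u (x k)"] by blast
    with u(1) show False by (auto simp: S_def)
  qed
  then have "card S \<le> CARD('m)" by (intro card_indep_le) simp
  with cS N_def show False by simp
qed




lemma sw1: "(a::'a::ab_group_add) - b = c \<Longrightarrow> b = a - c" by (auto simp: algebra_simps)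
lemma sw2: "(a::'a::ab_group_add) - b = c \<Longrightarrow> a = c + b" by (auto simp: algebra_simps)

lemma string_nat:
  fixes H E F :: "complex^'m \<Rightarrow> complex^'m"
  assumes lH: "lin H" and lE: "lin E" and lF: "lin F"
    and r1: "\<And>x. E (H x) - H (E x) = 2 *s E x"
    and r3: "\<And>x. F (E x) - E (F x) = H x"
    and w: "w \<noteq> 0" "F w = 0" "H w = l *s w"
  shows "\<exists>m::nat. l = of_nat m"
proof -
  define y where "y k = (E^^k) w" for k
  have ySuc: "y (Suc k) = E (y k)" for k by (simp add: y_def)
  have Hy: "H (y k) = (l - 2 * of_nat k) *s y k" for k
  proof (induction k)
    case 0 then show ?case using w(3) by (simp add: y_def)
  next
    case (Suc k)
    have "H (y (Suc k)) = E (H (y k)) - 2 *s E (y k)"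
      unfolding ySuc by (rule sw1[OF r1])
    also have "\<dots> = (l - 2 * of_nat k) *s E (y k) - 2 *s E (y k)"
      by (simp only: Suc.IH lin_scale[OF lE])
    also have "\<dots> = ((l - 2 * of_nat k) - 2) *s E (y k)"
      by (simp only: vec.scale_left_diff_distrib)
    also have "\<dots> = (l - 2 * of_nat (Suc k)) *s y (Suc k)"
    proof -
      have "(l - 2 * of_nat k) - 2 = l - 2 * of_nat (Suc k)" by (simp add: algebra_simps)
      then show ?thesis by (simp only: ySuc)
    qed
    finally show ?case .
  qed
  have Fy: "F (y (Suc k)) = (of_nat (Suc k) * (l - of_nat k)) *s y k" for k
  proof (induction k)
    case 0
    have "F (y (Suc 0)) = H w + E (F w)" using sw2[OF r3[of w]] unfolding ySuc by (simp add: y_def)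
    then show ?case using w by (simp add: lin_zero[OF lE] y_def)
  next
    case (Suc k)
    have "F (y (Suc (Suc k))) = H (y (Suc k)) + E (F (y (Suc k)))"
      unfolding ySuc by (rule sw2[OF r3])
    also have "\<dots> = (l - 2 * of_nat (Suc k)) *s y (Suc k) + (of_nat (Suc k) * (l - of_nat k)) *s y (Suc k)"
      by (simp only: Suc.IH Hy lin_scale[OF lE] ySuc[symmetric])
    also have "\<dots> = ((l - 2 * of_nat (Suc k)) + (of_nat (Suc k) * (l - of_nat k))) *s y (Suc k)"
      by (simp only: vec.scale_left_distrib)
    also have "\<dots> = (of_nat (Suc (Suc k)) * (l - of_nat (Suc k))) *s y (Suc k)"
    proof -
      have "(l - 2 * of_nat (Suc k)) + (of_nat (Suc k) * (l - of_nat k)) = (of_nat (Suc (Suc k)) * (l - of_nat (Suc k)))"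
        by (simp add: algebra_simps)
      then show ?thesis by (simp only:)
    qed
    finally show ?case .
  qed
  have ex: "\<exists>k. y k = 0"
  proof (rule ccontr)
    assume "\<not> (\<exists>k. y k = 0)"
    then have "\<And>k. y k \<noteq> 0" by blast
    moreover have "inj (\<lambda>k. l - 2 * of_nat k :: complex)" by (rule injI) simp
    ultimately show False using eig_finite[OF lH, where x=y and \<mu>="\<lambda>k. l - 2 * of_nat k"] Hy by blast
  qed
  define k0 where "k0 = (LEAST k. y k = 0)"
  have yk0: "y k0 = 0" unfolding k0_def using ex by (rule LeastI_ex)
  have "k0 \<noteq> 0"
  proof
    assume "k0 = 0" with yk0 w(1) show False by (simp add: y_def)
  qed
  then obtain m where m: "k0 = Suc m" by (cases k0) auto
  have ym: "y m \<noteq> 0"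
  proof
    assume "y m = 0"
    then have "k0 \<le> m" unfolding k0_def by (rule Least_le)
    with m show False by simp
  qed
  have "(of_nat (Suc m) * (l - of_nat m)) *s y m = 0"
    using Fy[of m] yk0 m lin_zero[OF lF] by simp
  with ym have "of_nat (Suc m) * (l - of_nat m) = (0::complex)" by simp
  then have "l = of_nat m" by (simp del: of_nat_Suc)
  then show ?thesis by blast
qed

lemma triple_zero:
  fixes H E F B :: "complex^'m \<Rightarrow> complex^'m"
  assumes lH: "lin H" and lE: "lin E" and lF: "lin F"
    and r1: "\<And>x. E (H x) - H (E x) = 2 *s E x"
    and r2: "\<And>x. F (H x) - H (F x) = (-2) *s F x"
    and r3: "\<And>x. F (E x) - E (F x) = H x"
    and BF: "\<And>v. F v = 0 \<Longrightarrow> F (B v) = 0"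
    and BH: "\<And>v. H (B v) = 0 \<Longrightarrow> H v = 0"
    and BHH: "\<And>v \<mu>. H (H v) = \<mu> *s H v \<Longrightarrow> H (H (B v)) = (- \<mu>) *s H (B v)"
    and w: "w \<noteq> 0" "F w = 0" "H w = l *s w"
  shows "l = 0"
proof (rule ccontr)
  assume l0: "l \<noteq> 0"
  obtain m :: nat where m: "l = of_nat m" using string_nat[OF lH lE lF r1 r3 w] by blast
  define w1 where "w1 = H (B w)"
  have "F (B w) = 0" using BF w(2) .
  then have Fw1: "F w1 = 0" using r2[of "B w"] by (simp add: w1_def lin_zero[OF lH])
  have "H (H w) = l *s H w" using w(3) by (simp add: lin_scale[OF lH])
  then have Hw1: "H w1 = (- l) *s w1" using BHH unfolding w1_def by blast
  have w10: "w1 \<noteq> 0"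
  proof
    assume "w1 = 0"
    then have "H w = 0" using BH[of w] w1_def by simp
    with w(3) have "l *s w = 0" by simp
    with l0 w(1) show False by simp
  qed
  obtain m' :: nat where m': "- l = of_nat m'" using string_nat[OF lH lE lF r1 r3 w10 Fw1 Hw1] by blast
  from m m' have "of_nat m + of_nat m' = (0::complex)" by (metis add.right_inverse)
  then have "m = 0" by (metis add_eq_0_iff_both_eq_0 of_nat_add of_nat_eq_0_iff)
  with m l0 show False by simp
qed

lemma eig_negeven:
  fixes H E F B :: "complex^'m \<Rightarrow> complex^'m"
  assumes lH: "lin H" and lE: "lin E" and lF: "lin F"
    and r1: "\<And>x. E (H x) - H (E x) = 2 *s E x"
    and r2: "\<And>x. F (H x) - H (F x) = (-2) *s F x"
    and r3: "\<And>x. F (E x) - E (F x) = H x"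
    and BF: "\<And>v. F v = 0 \<Longrightarrow> F (B v) = 0"
    and BH: "\<And>v. H (B v) = 0 \<Longrightarrow> H v = 0"
    and BHH: "\<And>v \<mu>. H (H v) = \<mu> *s H v \<Longrightarrow> H (H (B v)) = (- \<mu>) *s H (B v)"
    and v: "v \<noteq> 0" "H v = \<nu> *s v"
  shows "\<exists>j::nat. \<nu> = - 2 * of_nat j"
proof -
  define z where "z k = (F^^k) v" for k
  have zSuc: "z (Suc k) = F (z k)" for k by (simp add: z_def)
  have Hz: "H (z k) = (\<nu> + 2 * of_nat k) *s z k" for k
  proof (induction k)
    case 0 then show ?case using v(2) by (simp add: z_def)
  next
    case (Suc k)
    have "H (z (Suc k)) = F (H (z k)) + 2 *s F (z k)"
      unfolding zSuc using sw1[OF r2[of "z k"]] by (simp add: vec.scale_minus_left)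
    also have "\<dots> = (\<nu> + 2 * of_nat k) *s F (z k) + 2 *s F (z k)"
      by (simp only: Suc.IH lin_scale[OF lF])
    also have "\<dots> = ((\<nu> + 2 * of_nat k) + 2) *s F (z k)"
      by (simp only: vec.scale_left_distrib)
    also have "\<dots> = (\<nu> + 2 * of_nat (Suc k)) *s z (Suc k)"
    proof -
      have "(\<nu> + 2 * of_nat k) + 2 = \<nu> + 2 * of_nat (Suc k)" by (simp add: algebra_simps)
      then show ?thesis by (simp only: zSuc)
    qed
    finally show ?case .
  qed
  have ex: "\<exists>k. z k = 0"
  proof (rule ccontr)
    assume "\<not> (\<exists>k. z k = 0)"
    then have "\<And>k. z k \<noteq> 0" by blast
    moreover have "inj (\<lambda>k. \<nu> + 2 * of_nat k :: complex)" by (rule injI) simp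
    ultimately show False using eig_finite[OF lH, where x=z and \<mu>="\<lambda>k. \<nu> + 2 * of_nat k"] Hz by blast
  qed
  define k0 where "k0 = (LEAST k. z k = 0)"
  have zk0: "z k0 = 0" unfolding k0_def using ex by (rule LeastI_ex)
  have "k0 \<noteq> 0"
  proof
    assume "k0 = 0" with zk0 v(1) show False by (simp add: z_def)
  qed
  then obtain j where j: "k0 = Suc j" by (cases k0) auto
  have zj: "z j \<noteq> 0"
  proof
    assume "z j = 0"
    then have "k0 \<le> j" unfolding k0_def by (rule Least_le)
    with j show False by simp
  qed
  have Fzj: "F (z j) = 0" using zk0 j by (simp add: z_def)
  have "\<nu> + 2 * of_nat j = 0"
    using triple_zero[OF lH lE lF r1 r2 r3 BF BH BHH zj Fzj Hz[of j]] .
  then have "\<nu> = - 2 * of_nat j" by (simp add: algebra_simps add_eq_0_iff)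
  then show ?thesis by blast
qed

lemma engel_lite:
  fixes H E :: "complex^'m \<Rightarrow> complex^'m"
  assumes lH: "lin H" and lE: "lin E"
    and r1: "\<And>x. E (H x) - H (E x) = 2 *s E x"
    and noeig: "\<And>y r. H y = r *s y \<Longrightarrow> y \<noteq> 0 \<Longrightarrow> r = 0"
  shows "E v = 0"
proof -
  have "\<exists>k. (H^^k) v = 0"
  proof (rule nilpotent_vec[OF lH])
    fix y r assume "H y = r *s y" "y \<noteq> 0" then show "r = 0" by (rule noeig)
  qed
  then obtain k where k: "(H^^k) v = 0" by blast
  define G where "G y = H y + 2 *s y" for y
  have GE: "(G^^j) (E x) = E ((H^^j) x)" for j x
  proof (induction j)
    case 0 then show ?case by simp
  next
    case (Suc j)
    have "E (H ((H^^j) x)) = H (E ((H^^j) x)) + 2 *s E ((H^^j) x)"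
      using sw2[OF r1[of "(H^^j) x"]] by (simp only: add.commute)
    then show ?case using Suc.IH by (simp only: funpow.simps o_apply G_def)
  qed
  have Ginj: "(G^^j) y = 0 \<Longrightarrow> y = 0" for j y
  proof (induction j arbitrary: y)
    case 0 then show ?case by simp
  next
    case (Suc j)
    have "(G^^j) (G y) = 0" using Suc.prems by (simp only: funpow_Suc_right o_apply)
    then have "G y = 0" by (rule Suc.IH)
    then have "H y = - (2 *s y)" unfolding G_def by (simp only: eq_neg_iff_add_eq_0)
    then have Hy: "H y = (-2) *s y" by (simp only: vec.scale_minus_left)
    show ?case
    proof (rule ccontr)
      assume "y \<noteq> 0"
      from noeig[OF Hy this] show False by simp
    qed
  qed
  have "(G^^k) (E v) = 0" using GE[of k v] k lin_zero[OF lE] by simp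
  then show ?thesis by (rule Ginj)
qed




definition Em :: "'n \<Rightarrow> 'n \<Rightarrow> complex^'n^'n" where
  "Em i j = (\<chi> a b. if a = i \<and> b = j then 1 else 0)"

lemma mm_entry: "((A::complex^'k^'m) ** (B::complex^'l^'k)) $ a $ b = (\<Sum>k\<in>UNIV. A $ a $ k * B $ k $ b)"
  by (simp add: matrix_matrix_mult_def)

lemma Em_entry [simp]: "Em i j $ a $ b = (if a = i \<and> b = j then 1 else 0)"
  by (simp add: Em_def)

lemma sd1: fixes j :: "'k::finite" shows "(\<Sum>k\<in>UNIV. (if k = j then 1 else 0) * (f k::complex)) = f j"
proof -
  have "(\<Sum>k\<in>UNIV. (if k = j then 1 else 0) * f k) = (\<Sum>k\<in>UNIV. if k = j then f k else 0)"
    by (rule sum.cong) auto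
  also have "\<dots> = f j" by (subst sum.delta) auto
  finally show ?thesis .
qed

lemma sd2: fixes j :: "'k::finite" shows "(\<Sum>k\<in>UNIV. (f k::complex) * (if k = j then 1 else 0)) = f j"
  using sd1[of j f] by (simp add: mult.commute)

lemma Em_left: "(Em i j ** A) $ a $ b = (if a = i then A $ j $ b else 0)"
proof (cases "a = i")
  case True
  then show ?thesis by (simp add: mm_entry sd1)
qed (simp add: mm_entry)

lemma Em_right: "(A ** Em i j) $ a $ b = (if b = j then A $ a $ i else 0)"
proof (cases "b = j")
  case True
  then show ?thesis by (simp add: mm_entry sd2)
qed (simp add: mm_entry)

lemma mm_diff_left: "((A::complex^'n^'n) - B) ** C = A ** C - B ** C"
  by (simp add: vec_eq_iff mm_entry left_diff_distrib sum_subtractf)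

lemma mm_diff_right: "(C::complex^'n^'n) ** (A - B) = C ** A - C ** B"
  by (simp add: vec_eq_iff mm_entry right_diff_distrib sum_subtractf)

lemma mm_neg_left: "(- (A::complex^'n^'n)) ** B = - (A ** B)"
  by (simp add: vec_eq_iff mm_entry sum_negf)

lemma mm_neg_right: "(B::complex^'n^'n) ** (- A) = - (B ** A)"
  by (simp add: vec_eq_iff mm_entry sum_negf)

lemma Em_Em: "Em i j ** Em k l = (if j = k then Em i l else 0)"
  by (simp add: vec_eq_iff Em_left)

lemma mscale_entry [simp]: "mscale c A $ a $ b = c * A $ a $ b"
  by (simp add: mscale_def)

lemma trace_Em: "trace (Em i j) = (if i = j then 1 else 0)"
proof (cases "i = j")
  case False
  have "trace (Em i j) = 0" unfolding trace_def using False by (intro sum.neutral) auto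
  then show ?thesis using False by simp
qed (simp add: trace_def)

lemma trace_neg: "trace (- (A::complex^'n^'n)) = - trace A"
  by (simp add: trace_def sum_negf)

lemma trace_mscale: "trace (mscale c A) = c * trace A"
  by (simp add: trace_def sum_distrib_left)

lemma sl_Em: "i \<noteq> j \<Longrightarrow> Em i j \<in> sl"
  by (simp add: sl_def trace_Em)

lemma sl_h: "Em i i - Em j j \<in> sl"
  by (simp add: sl_def trace_sub trace_Em)

lemma sl_neg: "A \<in> sl \<Longrightarrow> - A \<in> sl"
  by (simp add: sl_def trace_neg)

lemma sl_zero: "0 \<in> sl"
  by (simp add: sl_def trace_def)

lemma sl_add: "A \<in> sl \<Longrightarrow> B \<in> sl \<Longrightarrow> A + B \<in> sl"
  by (simp add: sl_def trace_add)

lemma sl_mscale: "A \<in> sl \<Longrightarrow> mscale c A \<in> sl"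
  by (simp add: sl_def trace_mscale)

lemma mscale_m1: "mscale (-1) A = - A"
  by (simp add: vec_eq_iff)

lemma neg_mscale: "- mscale c A = mscale (- c) A"
  by (simp add: vec_eq_iff)

definition trip :: "complex^'n^'n \<Rightarrow> complex^'n^'n \<Rightarrow> complex^'n^'n \<Rightarrow> bool" where
  "trip h e f \<longleftrightarrow> h \<in> sl \<and> e \<in> sl \<and> f \<in> sl \<and> h ** e - e ** h = mscale 2 e \<and>
     h ** f - f ** h = mscale (-2) f \<and> e ** f - f ** e = h"

lemma trip_swap: "trip h e f \<Longrightarrow> trip (- h) f e"
  unfolding trip_def
proof (elim conjE, intro conjI)
  assume a: "h \<in> sl" "e \<in> sl" "f \<in> sl" "h ** e - e ** h = mscale 2 e"
     "h ** f - f ** h = mscale (-2) f" "e ** f - f ** e = h"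
  show "- h \<in> sl" using a by (simp add: sl_neg)
  show "e \<in> sl" by (rule a(2))
  show "f \<in> sl" by (rule a(3))
  have "(- h) ** f - f ** (- h) = - (h ** f - f ** h)"
    by (simp add: mm_neg_left mm_neg_right)
  then show "(- h) ** f - f ** (- h) = mscale 2 f" using a(5) by (simp add: neg_mscale)
  have "(- h) ** e - e ** (- h) = - (h ** e - e ** h)"
    by (simp add: mm_neg_left mm_neg_right)
  then show "(- h) ** e - e ** (- h) = mscale (-2) e" using a(4) by (simp add: neg_mscale)
  have "f ** e - e ** f = - (e ** f - f ** e)" by simp
  then show "f ** e - e ** f = - h" using a(6) by simp
qed

lemma trip_Em:
  assumes "i \<noteq> j"
  shows "trip (Em i i - Em j j) (Em i j) (Em j i)"
  unfolding trip_def
  using assms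
  by (simp add: sl_Em sl_h mm_diff_left mm_diff_right Em_Em vec_eq_iff)

lemma center_zero:
  assumes n2: "CARD('n) \<ge> 2" and a: "(a::complex^'n^'n) \<in> sl"
    and comm: "\<And>s. s \<in> sl \<Longrightarrow> s ** a = a ** s"
  shows "a = 0"
proof -
  have other: "\<exists>i. i \<noteq> (j::'n)" for j
  proof (rule ccontr)
    assume "\<not> (\<exists>i. i \<noteq> j)"
    then have "UNIV = {j}" by auto
    then have "CARD('n) = card {j}" by (metis)
    then have "CARD('n) = 1" by simp
    with n2 show False by simp
  qed
  have E: "Em i j ** a = a ** Em i j" if "i \<noteq> j" for i j
    using comm[OF sl_Em[OF that]] .
  have off: "a $ j $ q = 0" if "q \<noteq> j" for j q
  proof -
    obtain i where i: "i \<noteq> j" using other by blast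
    have "(Em i j ** a) $ i $ q = (a ** Em i j) $ i $ q" using E[OF i] by simp
    then show ?thesis using that by (simp add: Em_left Em_right)
  qed
  have diag: "a $ j $ j = a $ i $ i" for i j
  proof (cases "i = j")
    case True then show ?thesis by simp
  next
    case False
    have "(Em i j ** a) $ i $ j = (a ** Em i j) $ i $ j" using E[OF False] by simp
    then show ?thesis by (simp add: Em_left Em_right)
  qed
  have "trace a = of_nat CARD('n) * a $ j $ j" for j
  proof -
    have "trace a = (\<Sum>i\<in>(UNIV::'n set). a $ j $ j)" unfolding trace_def
      by (intro sum.cong refl) (metis diag)
    then show ?thesis by simp
  qed
  moreover have "trace a = 0" using a by (simp add: sl_def)
  ultimately have d0: "a $ j $ j = 0" for j using n2 by simp
  show ?thesis
    by (simp add: vec_eq_iff) (metis d0 off)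
qed




context
  fixes act :: "complex^'m \<Rightarrow> complex^'n^'n \<Rightarrow> complex^'m"
  assumes rm: "right_sl_module act"
begin

lemma ms_add: "g \<in> sl \<Longrightarrow> act (v + w) g = act v g + act w g"
  using rm by (simp add: right_sl_module_def)
lemma ms_scale: "g \<in> sl \<Longrightarrow> act (c *s v) g = c *s act v g"
  using rm by (simp add: right_sl_module_def)
lemma ms_addg: "g \<in> sl \<Longrightarrow> h \<in> sl \<Longrightarrow> act v (g + h) = act v g + act v h"
  using rm by (simp add: right_sl_module_def)
lemma ms_scaleg: "g \<in> sl \<Longrightarrow> act v (mscale c g) = c *s act v g"
  using rm by (simp add: right_sl_module_def)
lemma ms_br: "g \<in> sl \<Longrightarrow> h \<in> sl \<Longrightarrow> act v (g ** h - h ** g) = act (act v g) h - act (act v h) g"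
  using rm unfolding right_sl_module_def by blast

lemma act_zero_v: "g \<in> sl \<Longrightarrow> act 0 g = 0"
  using ms_scale[of g 0 0] by simp
lemma act_v_zero: "act v 0 = 0"
  using ms_addg[OF sl_zero sl_zero, of v] by simp
lemma act_neg_g: "g \<in> sl \<Longrightarrow> act v (- g) = - act v g"
  using ms_scaleg[of g v "-1"] by (simp add: mscale_m1)
lemma act_neg_v: "g \<in> sl \<Longrightarrow> act (- v) g = - act v g"
  using ms_scale[of g "-1" v] by simp
lemma lin_act: "g \<in> sl \<Longrightarrow> lin (\<lambda>v. act v g)"
  by (simp add: lin_def ms_add ms_scale)

lemma trip_rel:
  assumes "trip h e f"
  shows "act (act x h) e - act (act x e) h = 2 *s act x e"
    and "act (act x h) f - act (act x f) h = (-2) *s act x f"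
    and "act (act x e) f - act (act x f) e = act x h"
proof -
  have t: "h \<in> sl" "e \<in> sl" "f \<in> sl" "h ** e - e ** h = mscale 2 e"
     "h ** f - f ** h = mscale (-2) f" "e ** f - f ** e = h"
    using assms by (auto simp: trip_def)
  show "act (act x h) e - act (act x e) h = 2 *s act x e"
    using ms_br[OF t(1,2), of x] ms_scaleg[OF t(2), of x 2] t(4) by simp
  show "act (act x h) f - act (act x f) h = (-2) *s act x f"
    using ms_br[OF t(1,3), of x] ms_scaleg[OF t(3), of x "-2"] t(5) by simp
  show "act (act x e) f - act (act x f) e = act x h"
    using ms_br[OF t(2,3), of x] t(6) by simp
qed

lemma sl_sum: "(\<And>x. x \<in> S \<Longrightarrow> M x \<in> sl) \<Longrightarrow> (\<Sum>x\<in>S. M x) \<in> sl"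
  by (induction S rule: infinite_finite_induct) (auto simp: sl_zero sl_add)

lemma act_sum: "(\<And>x. x \<in> S \<Longrightarrow> M x \<in> sl) \<Longrightarrow> act v (\<Sum>x\<in>S. M x) = (\<Sum>x\<in>S. act v (M x))"
proof (induction S rule: infinite_finite_induct)
  case (infinite A) then show ?case by (simp add: act_v_zero)
next
  case empty then show ?case by (simp add: act_v_zero)
next
  case (insert x F)
  then show ?case by (simp add: ms_addg sl_sum)
qed


definition Dm :: "'n \<Rightarrow> 'n \<Rightarrow> 'n \<Rightarrow> complex^'n^'n" where
  "Dm i0 p q = (if p = q then Em p p - Em i0 i0 else Em p q)"

lemma Dm_entry: "Dm i0 p q $ a $ b = (if a = p \<and> b = q then 1 else 0) - (if p = q \<and> a = i0 \<and> b = i0 then 1 else 0)"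
  by (auto simp: Dm_def)

lemma Dm_sl: "Dm i0 p q \<in> sl"
  by (auto simp: Dm_def sl_h sl_Em)

lemma sd3: fixes j :: "'k::finite" shows "(\<Sum>k\<in>UNIV. (f k::complex) * (if j = k then 1 else 0)) = f j"
  using sd2[where j=j and f=f] by (simp add: eq_commute[of j])

lemma decomp:
  assumes "g \<in> sl"
  shows "g = (\<Sum>p\<in>UNIV. \<Sum>q\<in>UNIV. mscale (g $ p $ q) (Dm i0 p q))"
proof -
  have "(\<Sum>p\<in>UNIV. \<Sum>q\<in>UNIV. mscale (g $ p $ q) (Dm i0 p q)) $ a $ b = g $ a $ b" for a b
  proof -
    have "(\<Sum>p\<in>UNIV. \<Sum>q\<in>UNIV. mscale (g $ p $ q) (Dm i0 p q)) $ a $ b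
        = (\<Sum>p\<in>UNIV. \<Sum>q\<in>UNIV. g $ p $ q * (if a = p \<and> b = q then 1 else 0))
          - (\<Sum>p\<in>UNIV. \<Sum>q\<in>UNIV. g $ p $ q * (if p = q \<and> a = i0 \<and> b = i0 then 1 else 0))"
      by (simp add: sum_component Dm_entry right_diff_distrib sum_subtractf)
    also have "(\<Sum>p\<in>UNIV. \<Sum>q\<in>UNIV. g $ p $ q * (if a = p \<and> b = q then 1 else 0)) = g $ a $ b"
    proof -
      have "(\<Sum>p\<in>UNIV. \<Sum>q\<in>UNIV. g $ p $ q * (if a = p \<and> b = q then 1 else 0))
          = (\<Sum>p\<in>UNIV. if p = a then g $ p $ b else 0)"
        by (rule sum.cong[OF refl]) (auto simp: sd3 intro: sum.neutral)
      then show ?thesis by simp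
    qed
    also have "(\<Sum>p\<in>UNIV. \<Sum>q\<in>UNIV. g $ p $ q * (if p = q \<and> a = i0 \<and> b = i0 then 1 else 0)) = 0"
    proof (cases "a = i0 \<and> b = i0")
      case True
      have "(\<Sum>p\<in>UNIV. \<Sum>q\<in>UNIV. g $ p $ q * (if p = q \<and> a = i0 \<and> b = i0 then 1 else 0))
          = (\<Sum>p\<in>UNIV. g $ p $ p)"
        by (rule sum.cong[OF refl]) (simp add: True sd3)
      also have "\<dots> = 0" using assms by (simp add: sl_def trace_def)
      finally show ?thesis .
    qed auto
    finally show ?thesis by simp
  qed
  then show ?thesis by (simp add: vec_eq_iff)
qed

lemma span_zero:
  assumes E0: "\<And>i j v. i \<noteq> j \<Longrightarrow> act v (Em i j) = 0"
    and g: "g \<in> sl"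
  shows "act v g = 0"
proof -
  fix i0 :: 'n
  have h0: "act w (Em p p - Em q q) = 0" for p q w
  proof (cases "p = q")
    case True then show ?thesis by (simp add: act_v_zero)
  next
    case False
    have "Em p q ** Em q p - Em q p ** Em p q = Em p p - Em q q"
      using False by (simp add: Em_Em)
    then have "act w (Em p p - Em q q) = act (act w (Em p q)) (Em q p) - act (act w (Em q p)) (Em p q)"
      using ms_br[OF sl_Em[OF False] sl_Em[OF not_sym[OF False]], where v=w] False by simp
    then show ?thesis using E0 False act_zero_v sl_Em by (metis diff_self)
  qed
  have D0: "act w (Dm i0 p q) = 0" for p q w
    by (cases "p = q") (simp_all add: Dm_def h0 E0)
  have "act v g = act v (\<Sum>p\<in>UNIV. \<Sum>q\<in>UNIV. mscale (g $ p $ q) (Dm i0 p q))"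
    using decomp[OF g, of i0] by simp
  also have "\<dots> = (\<Sum>p\<in>UNIV. \<Sum>q\<in>UNIV. act v (mscale (g $ p $ q) (Dm i0 p q)))"
    by (simp add: act_sum sl_sum sl_mscale Dm_sl)
  also have "\<dots> = 0" by (simp add: ms_scaleg Dm_sl D0)
  finally show ?thesis .
qed

end


lemma mscale_0 [simp]: "mscale c 0 = 0"
  by (simp add: vec_eq_iff)
lemma mscale_c0: "mscale 0 A = 0"
  by (simp add: vec_eq_iff)

lemma Llin_zero: "L_linear \<Phi> \<Longrightarrow> \<Phi> (0, 0) = (0, 0)"
proof -
  assume l: "L_linear \<Phi>"
  have "(0, 0) \<in> Lcar" by (simp add: Lcar_def sl_zero)
  then have "\<Phi> (lscale 0 (0,0)) = lscale 0 (\<Phi> (0,0))" using l unfolding L_linear_def by blast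
  then show ?thesis by (simp add: lscale_def mscale_c0)
qed

lemma Lcar_0: "(0, w) \<in> Lcar"
  by (simp add: Lcar_def sl_zero)

lemma Lcar_g: "g \<in> sl \<Longrightarrow> (g, w) \<in> Lcar"
  by (simp add: Lcar_def)

context
  fixes act :: "complex^'m \<Rightarrow> complex^'n^'n \<Rightarrow> complex^'m"
  assumes rm: "right_sl_module act"
begin

lemma aut_facts:
  assumes aut: "L_automorphism act \<Phi>" and g: "g \<in> sl" and x: "\<Phi> (g, v) = (- g, u)"
  shows "\<Phi> (0, act v g) = (0, - act u g)"
    and "\<Phi> (0, act (act v g) g) = (0, act (act u g) g)"
proof -
  have hom: "\<And>x y. x \<in> Lcar \<Longrightarrow> y \<in> Lcar \<Longrightarrow> \<Phi> (lbr act x y) = lbr act (\<Phi> x) (\<Phi> y)"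
    using aut by (simp add: L_automorphism_def)
  have "lbr act (g, v) (g, v) = (0, act v g)" by (simp add: lbr_def)
  then have "\<Phi> (0, act v g) = lbr act (- g, u) (- g, u)"
    using hom[OF Lcar_g[OF g, of v] Lcar_g[OF g, of v]] x by simp
  also have "\<dots> = (0, - act u g)" by (simp add: lbr_def act_neg_g[OF rm g])
  finally show 1: "\<Phi> (0, act v g) = (0, - act u g)" .
  have "lbr act (0, act v g) (g, v) = (0, act (act v g) g)" by (simp add: lbr_def)
  then have "\<Phi> (0, act (act v g) g) = lbr act (0, - act u g) (- g, u)"
    using hom[OF Lcar_0[of "act v g"] Lcar_g[OF g, of v]] x 1 by simp
  also have "\<dots> = (0, act (act u g) g)"
    by (simp add: lbr_def act_neg_v[OF rm sl_neg[OF g]] act_neg_v[OF rm g] act_neg_g[OF rm g])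
  finally show "\<Phi> (0, act (act v g) g) = (0, act (act u g) g)" .
qed

lemma aut_I:
  assumes n2: "CARD('n) \<ge> 2" and aut: "L_automorphism act \<Phi>"
  shows "fst (\<Phi> (0, w)) = 0"
proof -
  have lin: "L_linear \<Phi>" and bij: "bij_betw \<Phi> Lcar Lcar"
    and hom: "\<And>x y. x \<in> Lcar \<Longrightarrow> y \<in> Lcar \<Longrightarrow> \<Phi> (lbr act x y) = lbr act (\<Phi> x) (\<Phi> y)"
    using aut by (auto simp: L_automorphism_def)
  define a where "a = fst (\<Phi> (0, w))"
  have "\<Phi> (0, w) \<in> Lcar" using lin Lcar_0 by (auto simp: L_linear_def)
  then have a: "a \<in> sl" by (auto simp: a_def Lcar_def)
  have "s ** a = a ** s" if s: "s \<in> sl" for s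
  proof -
    have "(s, 0) \<in> \<Phi> ` Lcar" using bij Lcar_g[OF s] by (simp add: bij_betw_def)
    then obtain y where y: "y \<in> Lcar" "\<Phi> y = (s, 0)" by auto
    have "lbr act y (0, w) = (0, 0)" by (simp add: lbr_def act_v_zero[OF rm])
    then have "(0, 0) = lbr act (\<Phi> y) (\<Phi> (0, w))"
      using hom[OF y(1) Lcar_0[of w]] Llin_zero[OF lin] by simp
    then have "s ** a - a ** s = 0" using y(2) by (simp add: lbr_def a_def)
    then show ?thesis by simp
  qed
  then have "a = 0" by (rule center_zero[OF n2 a])
  then show ?thesis by (simp add: a_def)
qed

end




theorem lemma3p5:
  fixes act :: "complex^'m \<Rightarrow> complex^'n^'n \<Rightarrow> complex^'m"
    and \<Delta> :: "(complex^'n^'n) \<times> (complex^'m) \<Rightarrow> (complex^'n^'n) \<times> (complex^'m)"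
  assumes "CARD('n) \<ge> 2"
    and "right_sl_module act"
    and "irreducible_module act"
    and "nontrivial_action act"
    and "L_linear \<Delta>"
    and "\<forall>x\<in>sl. fst (\<Delta> (x, 0)) = - x"
  shows "\<not> L_local_automorphism act \<Delta>"
proof
  assume loc: "L_local_automorphism act \<Delta>"
  note n2 = assms(1) and rm = assms(2) and linD = assms(5)
  define B where "B v = snd (\<Delta> (0, v))" for v
  define A where "A g = snd (\<Delta> (g, 0))" for g
  have locx: "\<exists>\<Phi>. L_automorphism act \<Phi> \<and> \<Phi> x = \<Delta> x" if "x \<in> Lcar" for x
    using loc that by (simp add: L_local_automorphism_def)
  have D0: "\<Delta> (0, v) = (0, B v)" for v
  proof -
    obtain \<Phi> where \<Phi>: "L_automorphism act \<Phi>" "\<Phi> (0, v) = \<Delta> (0, v)" using locx[OF Lcar_0] by blast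
    have "fst (\<Delta> (0, v)) = 0" using aut_I[OF rm n2 \<Phi>(1)] \<Phi>(2) by metis
    then show ?thesis by (simp add: B_def prod_eq_iff)
  qed
  have B0: "B 0 = 0" using Llin_zero[OF linD] by (simp add: B_def)
  have Dg: "\<Delta> (g, v) = (- g, A g + B v)" if g: "g \<in> sl" for g v
  proof -
    have "\<Delta> ((g, 0) + (0, v)) = \<Delta> (g, 0) + \<Delta> (0, v)"
      using linD Lcar_g[OF g] Lcar_0 unfolding L_linear_def by blast
    moreover have "(g, 0) + (0, v) = (g, v)" by simp
    moreover have "\<Delta> (g, 0) = (- g, A g)" using assms(6) g by (simp add: A_def prod_eq_iff)
    ultimately show ?thesis using D0 by simp
  qed
  have getPhi: "\<exists>\<Phi>. L_automorphism act \<Phi> \<and> \<Phi> (g, v) = (- g, A g + B v)" if g: "g \<in> sl" for g v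
    using locx[OF Lcar_g[OF g, of v]] Dg[OF g] by simp
  have A1: "act (A g) g = 0" if g: "g \<in> sl" for g
  proof -
    obtain \<Phi> where \<Phi>: "L_automorphism act \<Phi>" "\<Phi> (g, 0) = (- g, A g + B 0)" using getPhi[OF g] by blast
    have "\<Phi> (0, act 0 g) = (0, - act (A g + B 0) g)" by (rule aut_facts(1)[OF rm \<Phi>(1) g \<Phi>(2)])
    moreover have "\<Phi> (0, 0) = (0, 0)" using \<Phi>(1) by (simp add: L_automorphism_def Llin_zero)
    ultimately show ?thesis by (simp add: act_zero_v[OF rm g] B0)
  qed
  have actu: "act (A g + B v) g = act (B v) g" if g: "g \<in> sl" for g v
    by (simp add: ms_add[OF rm g] A1[OF g])
  have Ba: "act (B v) g = 0" if g: "g \<in> sl" and "act v g = 0" for g v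
  proof -
    obtain \<Phi> where \<Phi>: "L_automorphism act \<Phi>" "\<Phi> (g, v) = (- g, A g + B v)" using getPhi[OF g] by blast
    have "\<Phi> (0, act v g) = (0, - act (A g + B v) g)" by (rule aut_facts(1)[OF rm \<Phi>(1) g \<Phi>(2)])
    moreover have "\<Phi> (0, 0) = (0, 0)" using \<Phi>(1) by (simp add: L_automorphism_def Llin_zero)
    ultimately show ?thesis using that(2) by (simp add: actu[OF g])
  qed
  have BH: "act v g = 0" if g: "g \<in> sl" and "act (B v) g = 0" for g v
  proof -
    obtain \<Phi> where \<Phi>: "L_automorphism act \<Phi>" "\<Phi> (g, v) = (- g, A g + B v)" using getPhi[OF g] by blast
    have "\<Phi> (0, act v g) = (0, - act (A g + B v) g)" by (rule aut_facts(1)[OF rm \<Phi>(1) g \<Phi>(2)])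
    also have "\<dots> = (0, 0)" using that(2) by (simp add: actu[OF g])
    also have "\<dots> = \<Phi> (0, 0)" using \<Phi>(1) by (simp add: L_automorphism_def Llin_zero)
    finally have "\<Phi> (0, act v g) = \<Phi> (0, 0)" .
    moreover have "inj_on \<Phi> Lcar" using \<Phi>(1) by (simp add: L_automorphism_def bij_betw_def)
    ultimately have "(0, act v g) = ((0, 0) :: (complex^'n^'n) \<times> (complex^'m))"
      using Lcar_0 by (meson inj_onD)
    then show ?thesis by simp
  qed
  have BHH: "act (act (B v) g) g = (- \<mu>) *s act (B v) g"
    if g: "g \<in> sl" and h: "act (act v g) g = \<mu> *s act v g" for g v \<mu>
  proof -
    obtain \<Phi> where \<Phi>: "L_automorphism act \<Phi>" "\<Phi> (g, v) = (- g, A g + B v)" using getPhi[OF g] by blast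
    have l: "L_linear \<Phi>" using \<Phi>(1) by (simp add: L_automorphism_def)
    have 1: "\<Phi> (0, act v g) = (0, - act (B v) g)"
      using aut_facts(1)[OF rm \<Phi>(1) g \<Phi>(2)] by (simp add: actu[OF g])
    have 2: "\<Phi> (0, act (act v g) g) = (0, act (act (B v) g) g)"
      using aut_facts(2)[OF rm \<Phi>(1) g \<Phi>(2)] by (simp add: actu[OF g])
    have "(0, act (act v g) g) = lscale \<mu> (0, act v g)" by (simp add: lscale_def h)
    then have "\<Phi> (0, act (act v g) g) = lscale \<mu> (\<Phi> (0, act v g))"
      using l Lcar_0 unfolding L_linear_def by metis
    then have "act (act (B v) g) g = \<mu> *s (- act (B v) g)"
      using 1 2 by (simp add: lscale_def)
    then show ?thesis by (simp add: vec.scale_minus_left vec.scale_minus_right)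
  qed
  have negeven: "\<exists>j::nat. \<nu> = - 2 * of_nat j"
    if t: "trip h e f" and v: "v \<noteq> 0" "act v h = \<nu> *s v" for h e f v \<nu>
  proof -
    have s: "h \<in> sl" "e \<in> sl" "f \<in> sl" using t by (auto simp: trip_def)
    show ?thesis
    proof (rule eig_negeven[where H="\<lambda>v. act v h" and E="\<lambda>v. act v e" and F="\<lambda>v. act v f" and B=B])
      show "lin (\<lambda>v. act v h)" "lin (\<lambda>v. act v e)" "lin (\<lambda>v. act v f)"
        using s by (auto intro: lin_act[OF rm])
      show "\<And>x. act (act x h) e - act (act x e) h = 2 *s act x e" by (rule trip_rel(1)[OF rm t])
      show "\<And>x. act (act x h) f - act (act x f) h = (-2) *s act x f" by (rule trip_rel(2)[OF rm t])
      show "\<And>x. act (act x e) f - act (act x f) e = act x h" by (rule trip_rel(3)[OF rm t])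
      show "\<And>v. act v f = 0 \<Longrightarrow> act (B v) f = 0" using Ba[OF s(3)] by blast
      show "\<And>v. act (B v) h = 0 \<Longrightarrow> act v h = 0" using BH[OF s(1)] by blast
      show "\<And>v \<mu>. act (act v h) h = \<mu> *s act v h \<Longrightarrow> act (act (B v) h) h = (- \<mu>) *s act (B v) h"
        using BHH[OF s(1)] by blast
      show "v \<noteq> 0" "act v h = \<nu> *s v" using v by auto
    qed
  qed
  have eig0: "\<nu> = 0" if ij: "i \<noteq> j" and v: "v \<noteq> 0" "act v (Em i i - Em j j) = \<nu> *s v" for i j v \<nu>
  proof -
    have t: "trip (Em i i - Em j j) (Em i j) (Em j i)" by (rule trip_Em[OF ij])
    obtain j1 :: nat where j1: "\<nu> = - 2 * of_nat j1" using negeven[OF t v] by blast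
    have "act v (- (Em i i - Em j j)) = - act v (Em i i - Em j j)" by (rule act_neg_g[OF rm sl_h])
    also have "\<dots> = (- \<nu>) *s v" using v(2) by (simp add: vec.scale_minus_left)
    finally have "act v (- (Em i i - Em j j)) = (- \<nu>) *s v" .
    then obtain j2 :: nat where j2: "- \<nu> = - 2 * of_nat j2" using negeven[OF trip_swap[OF t] v(1)] by blast
    from j1 j2 have "of_nat j1 = - (of_nat j2 :: complex)" by (simp add: algebra_simps)
    then have "of_nat (j1 + j2) = (0::complex)" by simp
    then have "j1 + j2 = 0" by (simp only: of_nat_eq_0_iff)
    then have "j1 = 0" by simp
    with j1 show ?thesis by simp
  qed
  have E0: "act v (Em i j) = 0" if ij: "i \<noteq> j" for i j v
  proof (rule engel_lite[where H="\<lambda>v. act v (Em i i - Em j j)" and E="\<lambda>v. act v (Em i j)"])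
    show "lin (\<lambda>v. act v (Em i i - Em j j))" by (rule lin_act[OF rm sl_h])
    show "lin (\<lambda>v. act v (Em i j))" by (rule lin_act[OF rm sl_Em[OF ij]])
    show "\<And>x. act (act x (Em i i - Em j j)) (Em i j) - act (act x (Em i j)) (Em i i - Em j j) = 2 *s act x (Em i j)"
      by (rule trip_rel(1)[OF rm trip_Em[OF ij]])
    show "\<And>y r. act y (Em i i - Em j j) = r *s y \<Longrightarrow> y \<noteq> 0 \<Longrightarrow> r = 0"
      using eig0[OF ij] by blast
  qed
  have "act v g = 0" if "g \<in> sl" for v g
    by (rule span_zero[OF rm E0 that]) auto
  with assms(4) show False by (auto simp: nontrivial_action_def)
qed


end
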